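(* Fix a binary instance $(\mu_0,\hat q)$. There exist a constant $c>0$ and a horizon $T_0$, depending only on $(\mu_0,\hat q)$, such that for every $T\ge T_0$ and every (possibly randomized) sender policy $\Pi$, $$\sup_{\alpha^\star\in[0,1]}\mathrm{Reg}_T(\Pi;\alpha^\star)\ge c\log\log T.$$
   Context: Binary model: states $\Omega=\{0,1\}$, actions $A=\{0,1\}$, prior $\mu_0=\Pr(\omega=1)\in(0,1)$, cutoff $\hat q\in(\mu_0,1)$, sender utility $u_S(a,\omega)=\mathbf 1\{a=1\}$. A receiver with fixed bias $\alpha^\star\in[0,1]$, unknown to the sender, takes action $1$ after Bayesian posterior $\nu=\Pr(\omega=1\mid s)$ iff $(1-\alpha^\star)\mu_0+\alpha^\star\nu\ge\hat q$. Over $T$ rounds, in each round $t$: - The sender commits to a Bayes-plausible distribution over posteriors (finitely supported on $[0,1]$ with mean $\mu_0$), chosen as a possibly randomized function of the history. - A state $\omega_t\sim\mu_0$ and a posterior $\nu_t$ are realized consistently with the committed distribution. - The receiver acts, and the sender observes the scheme, $\omega_t$, $\nu_t$ and the action. A sender policy $\Pi$ may depend on $(\mu_0,\hat q)$ and $T$ but not on $\alpha^\star$. Let $\mathrm{OPT}(\alpha^\star)$ be the supremum over Bayes-plausible distributions of the probability of inducing action $1$. The regret is $\mathrm{Reg}_T(\Pi;\alpha^\star)=T\cdot\mathrm{OPT}(\alpha^\star)-\sum_t\mathbb E[\Pr(\text{action }1\text{ in round }t\mid\text{history})]$. *)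

theory Defs
  imports "HOL-Probability.Probability"
begin

text \<open>States: True = (omega = 1), False = (omega = 0).  A signaling scheme is
  represented by its distribution over posteriors nu = Pr(omega = 1 | s).\<close>

definition bayes_plausible :: "real \<Rightarrow> real pmf \<Rightarrow> bool" where
  "bayes_plausible mu0 tau \<longleftrightarrow>
     finite (set_pmf tau) \<and> set_pmf tau \<subseteq> {0..1} \<and>
     measure_pmf.expectation tau (\<lambda>nu. nu) = mu0"

definition acts1 :: "real \<Rightarrow> real \<Rightarrow> real \<Rightarrow> real \<Rightarrow> bool" where
  "acts1 mu0 qhat alpha nu \<longleftrightarrow> (1 - alpha) * mu0 + alpha * nu \<ge> qhat"

text \<open>A history entry: (committed scheme, realized state, realized posterior, action).\<close>
type_synonym history = "(real pmf \<times> bool \<times> real \<times> bool) list"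

type_synonym policy = "history \<Rightarrow> real pmf pmf"

definition valid_policy :: "real \<Rightarrow> policy \<Rightarrow> bool" where
  "valid_policy mu0 Pol \<longleftrightarrow> (\<forall>h. \<forall>tau \<in> set_pmf (Pol h). bayes_plausible mu0 tau)"

fun hist_dist :: "real \<Rightarrow> real \<Rightarrow> real \<Rightarrow> policy \<Rightarrow> nat \<Rightarrow> history pmf" where
  "hist_dist mu0 qhat alpha Pol 0 = return_pmf []"
| "hist_dist mu0 qhat alpha Pol (Suc t) =
     bind_pmf (hist_dist mu0 qhat alpha Pol t) (\<lambda>h.
     bind_pmf (Pol h) (\<lambda>tau.
     bind_pmf tau (\<lambda>nu.
     bind_pmf (bernoulli_pmf nu) (\<lambda>omega.
     return_pmf (h @ [(tau, omega, nu, acts1 mu0 qhat alpha nu)])))))"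

definition OPT :: "real \<Rightarrow> real \<Rightarrow> real \<Rightarrow> real" where
  "OPT mu0 qhat alpha =
     Sup ((\<lambda>tau. measure_pmf.prob tau {nu. acts1 mu0 qhat alpha nu}) `
          {tau. bayes_plausible mu0 tau})"

text \<open>Expected probability of action 1 in round t (rounds t = 0..T-1),
  i.e. E[Pr(action 1 in round t | history)].\<close>
definition round_success :: "real \<Rightarrow> real \<Rightarrow> real \<Rightarrow> policy \<Rightarrow> nat \<Rightarrow> real" where
  "round_success mu0 qhat alpha Pol t =
     measure_pmf.expectation (hist_dist mu0 qhat alpha Pol t) (\<lambda>h.
       measure_pmf.expectation (Pol h) (\<lambda>tau.
         measure_pmf.prob tau {nu. acts1 mu0 qhat alpha nu}))"

definition regret :: "real \<Rightarrow> real \<Rightarrow> nat \<Rightarrow> policy \<Rightarrow> real \<Rightarrow> real" where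
  "regret mu0 qhat T Pol alpha =
     real T * OPT mu0 qhat alpha - (\<Sum>t<T. round_success mu0 qhat alpha Pol t)"

end

theory Submission
  imports Defs
begin

lemma hist_shift:
  "hist_dist mu0 qhat alpha Pol (Suc t) =
     bind_pmf (Pol []) (\<lambda>tau. bind_pmf tau (\<lambda>nu. bind_pmf (bernoulli_pmf nu) (\<lambda>omega.
       map_pmf (\<lambda>h. (tau, omega, nu, acts1 mu0 qhat alpha nu) # h)
         (hist_dist mu0 qhat alpha (\<lambda>h. Pol ((tau, omega, nu, acts1 mu0 qhat alpha nu) # h)) t))))"
proof (induction t arbitrary: Pol)
  case 0
  then show ?case by (simp add: bind_return_pmf)
next
  case (Suc t)
  show ?case
    apply (subst hist_dist.simps(2))
    apply (subst Suc)
    apply (simp add: bind_assoc_pmf bind_map_pmf map_bind_pmf bind_return_pmf)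
    done
qed

lemma integral_bind_pmf_real:
  fixes f :: "'b \<Rightarrow> real"
  assumes "\<And>x. \<bar>f x\<bar> \<le> B"
  shows "measure_pmf.expectation (bind_pmf M N) f = measure_pmf.expectation M (\<lambda>x. measure_pmf.expectation (N x) f)"
proof -
  have "measure_pmf (bind_pmf M N) = measure_pmf M \<bind> (\<lambda>x. measure_pmf (N x))"
    by (rule measure_pmf_bind)
  moreover have "integral\<^sup>L (measure_pmf M \<bind> (\<lambda>x. measure_pmf (N x))) f = \<integral>x. integral\<^sup>L (measure_pmf (N x)) f \<partial>measure_pmf M"
    apply (rule integral_bind[where K="count_space UNIV" and B=B and B'=1])
    using assms apply (auto simp: space_subprob_algebra prob_space_imp_subprob_space prob_space_measure_pmf)
    done
  ultimately show ?thesis by simp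
qed

lemma int_bnd:
  fixes f :: "'a \<Rightarrow> real"
  assumes "\<And>x. x \<in> set_pmf M \<Longrightarrow> \<bar>f x\<bar> \<le> B"
  shows "integrable (measure_pmf M) f"
  by (rule measure_pmf.integrable_const_bound[where B=B]) (use assms in \<open>auto intro!: AE_pmfI\<close>)

lemma E_bnd:
  fixes f :: "'a \<Rightarrow> real"
  assumes "\<And>x. x \<in> set_pmf M \<Longrightarrow> lo \<le> f x \<and> f x \<le> hi"
  shows "lo \<le> measure_pmf.expectation M f \<and> measure_pmf.expectation M f \<le> hi"
proof -
  have b: "\<And>x. x \<in> set_pmf M \<Longrightarrow> \<bar>f x\<bar> \<le> \<bar>lo\<bar> + \<bar>hi\<bar>" using assms by fastforce
  have i: "integrable (measure_pmf M) f" by (rule int_bnd[OF b])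
  show ?thesis
    using measure_pmf.integral_ge_const[OF i, of lo] measure_pmf.integral_le_const[OF i, of hi] assms
    by (auto intro!: AE_pmfI)
qed

lemma E_cong:
  fixes f :: "'a \<Rightarrow> real"
  assumes "\<And>x. x \<in> set_pmf M \<Longrightarrow> f x = g x"
  shows "measure_pmf.expectation M f = measure_pmf.expectation M g"
  by (rule integral_cong_AE) (use assms in \<open>auto intro!: AE_pmfI\<close>)

lemma E_mono:
  fixes f :: "'a \<Rightarrow> real"
  assumes "\<And>x. x \<in> set_pmf M \<Longrightarrow> f x \<le> g x"
    and "\<And>x. x \<in> set_pmf M \<Longrightarrow> \<bar>f x\<bar> \<le> B" "\<And>x. x \<in> set_pmf M \<Longrightarrow> \<bar>g x\<bar> \<le> B"
  shows "measure_pmf.expectation M f \<le> measure_pmf.expectation M g"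
  by (rule integral_mono_AE) (use assms in \<open>auto intro!: AE_pmfI int_bnd\<close>)

lemma E_add:
  fixes f :: "'a \<Rightarrow> real"
  assumes "\<And>x. x \<in> set_pmf M \<Longrightarrow> \<bar>f x\<bar> \<le> B" "\<And>x. x \<in> set_pmf M \<Longrightarrow> \<bar>g x\<bar> \<le> B'"
  shows "measure_pmf.expectation M (\<lambda>x. f x + g x) = measure_pmf.expectation M f + measure_pmf.expectation M g"
  by (rule Bochner_Integration.integral_add) (use assms in \<open>auto intro!: int_bnd\<close>)

lemma E_sum:
  fixes f :: "nat \<Rightarrow> 'a \<Rightarrow> real"
  assumes "\<And>i x. i \<in> I \<Longrightarrow> x \<in> set_pmf M \<Longrightarrow> \<bar>f i x\<bar> \<le> B"
  shows "measure_pmf.expectation M (\<lambda>x. \<Sum>i\<in>I. f i x) = (\<Sum>i\<in>I. measure_pmf.expectation M (f i))"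
  by (rule Bochner_Integration.integral_sum) (use assms in \<open>auto intro!: int_bnd\<close>)

lemma E_const: "measure_pmf.expectation M (\<lambda>x. c) = (c::real)"
  by simp

definition cst :: "real \<Rightarrow> real \<Rightarrow> real" where
  "cst th nu = (if th \<le> nu then nu - th else nu)"

definition gP :: "policy \<Rightarrow> real \<Rightarrow> history \<Rightarrow> real" where
  "gP Pol th h = measure_pmf.expectation (Pol h) (\<lambda>tau. measure_pmf.expectation tau (cst th))"

definition JJ :: "real \<Rightarrow> real \<Rightarrow> real \<Rightarrow> policy \<Rightarrow> real \<Rightarrow> nat \<Rightarrow> real" where
  "JJ mu0 qhat alpha Pol th n = (\<Sum>t<n. measure_pmf.expectation (hist_dist mu0 qhat alpha Pol t) (gP Pol th))"

lemma cst_bnd: "0 \<le> th \<Longrightarrow> th \<le> 1 \<Longrightarrow> 0 \<le> nu \<Longrightarrow> nu \<le> 1 \<Longrightarrow> 0 \<le> cst th nu \<and> cst th nu \<le> 1"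
  by (auto simp: cst_def)

lemma bp_supp: "bayes_plausible mu0 tau \<Longrightarrow> nu \<in> set_pmf tau \<Longrightarrow> 0 \<le> nu \<and> nu \<le> 1"
  by (auto simp: bayes_plausible_def)

lemma Ecst_bnd:
  assumes "bayes_plausible mu0 tau" "0 \<le> th" "th \<le> 1"
  shows "0 \<le> measure_pmf.expectation tau (cst th) \<and> measure_pmf.expectation tau (cst th) \<le> 1"
  by (rule E_bnd) (use assms cst_bnd bp_supp in blast)

lemma gP_bnd:
  assumes "valid_policy mu0 Pol" "0 \<le> th" "th \<le> 1"
  shows "0 \<le> gP Pol th h \<and> gP Pol th h \<le> 1"
  unfolding gP_def
proof (rule E_bnd)
  fix x assume "x \<in> set_pmf (Pol h)"
  then have "bayes_plausible mu0 x" using assms(1) by (auto simp: valid_policy_def)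
  then show "0 \<le> measure_pmf.expectation x (cst th) \<and> measure_pmf.expectation x (cst th) \<le> 1"
    using Ecst_bnd assms(2,3) by blast
qed

lemma valid_shift: "valid_policy mu0 Pol \<Longrightarrow> valid_policy mu0 (\<lambda>h. Pol (e # h))"
  by (auto simp: valid_policy_def)

lemma JJ_bnd:
  assumes "valid_policy mu0 Pol" "0 \<le> th" "th \<le> 1"
  shows "0 \<le> JJ mu0 qhat alpha Pol th n \<and> JJ mu0 qhat alpha Pol th n \<le> real n"
proof -
  have "\<And>t. 0 \<le> measure_pmf.expectation (hist_dist mu0 qhat alpha Pol t) (gP Pol th) \<and>
     measure_pmf.expectation (hist_dist mu0 qhat alpha Pol t) (gP Pol th) \<le> 1"
    by (rule E_bnd) (use gP_bnd[OF assms] in auto)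
  then show ?thesis unfolding JJ_def
    using sum_bounded_above[of "{..<n}" "\<lambda>t. measure_pmf.expectation (hist_dist mu0 qhat alpha Pol t) (gP Pol th)" 1]
    by (auto intro: sum_nonneg)
qed

lemma Eh_bnd:
  assumes "valid_policy mu0 Pol" "0 \<le> th" "th \<le> 1"
  shows "0 \<le> measure_pmf.expectation (hist_dist mu0 qhat alpha Pol t) (gP Pol th) \<and>
     measure_pmf.expectation (hist_dist mu0 qhat alpha Pol t) (gP Pol th) \<le> 1"
  by (rule E_bnd) (use gP_bnd[OF assms] in auto)

lemma JJ_Suc:
  assumes V: "valid_policy mu0 Pol" and th: "0 \<le> th" "th \<le> 1"
  shows "JJ mu0 qhat alpha Pol th (Suc n) =
    measure_pmf.expectation (Pol []) (\<lambda>tau. measure_pmf.expectation tau (\<lambda>nu.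
      measure_pmf.expectation (bernoulli_pmf nu) (\<lambda>omega.
        cst th nu + JJ mu0 qhat alpha (\<lambda>h. Pol ((tau, omega, nu, acts1 mu0 qhat alpha nu) # h)) th n)))"
proof -
  define T where "T = (\<lambda>t tau nu omega. measure_pmf.expectation
      (hist_dist mu0 qhat alpha (\<lambda>h. Pol ((tau, omega, nu, acts1 mu0 qhat alpha nu) # h)) t)
      (gP (\<lambda>h. Pol ((tau, omega, nu, acts1 mu0 qhat alpha nu) # h)) th))"
  have Tb: "0 \<le> T t tau nu omega \<and> T t tau nu omega \<le> 1" for t tau nu omega
    unfolding T_def by (rule Eh_bnd[OF valid_shift[OF V] th])
  have Tb': "\<bar>T t tau nu omega\<bar> \<le> 1" for t tau nu omega using Tb[of t tau nu omega] by auto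
  have gb: "\<And>h. \<bar>gP Pol th h\<bar> \<le> 1" using gP_bnd[OF V th] by (simp add: abs_le_iff)
  have step: "measure_pmf.expectation (hist_dist mu0 qhat alpha Pol (Suc t)) (gP Pol th) =
     measure_pmf.expectation (Pol []) (\<lambda>tau. measure_pmf.expectation tau (\<lambda>nu.
      measure_pmf.expectation (bernoulli_pmf nu) (\<lambda>omega. T t tau nu omega)))" for t
    unfolding T_def
    apply (simp only: hist_shift integral_bind_pmf_real[OF gb] integral_map_pmf)
    apply (simp add: gP_def[abs_def])
    done
  have sumb: "\<bar>\<Sum>t<n. T t tau nu omega\<bar> \<le> real n" for tau nu omega
  proof -
    have "0 \<le> (\<Sum>t<n. T t tau nu omega)" using Tb by (auto intro: sum_nonneg)
    moreover have "(\<Sum>t<n. T t tau nu omega) \<le> real n"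
      using sum_bounded_above[of "{..<n}" "\<lambda>t. T t tau nu omega" 1] Tb by auto
    ultimately show ?thesis by auto
  qed
  have JJe: "JJ mu0 qhat alpha (\<lambda>h. Pol ((tau, omega, nu, acts1 mu0 qhat alpha nu) # h)) th n
      = (\<Sum>t<n. T t tau nu omega)" for tau nu omega
    unfolding JJ_def T_def by simp
  have in1: "measure_pmf.expectation (bernoulli_pmf nu) (\<lambda>omega. cst th nu + (\<Sum>t<n. T t tau nu omega))
      = cst th nu + (\<Sum>t<n. measure_pmf.expectation (bernoulli_pmf nu) (T t tau nu))" for tau nu
    apply (subst E_add[where B="\<bar>cst th nu\<bar>" and B'="real n"])
      apply (simp, rule sumb)
    apply (subst E_sum[where B=1])
     apply (rule Tb')
    apply simp
    done
  have in2: "measure_pmf.expectation tau (\<lambda>nu. cst th nu + (\<Sum>t<n. measure_pmf.expectation (bernoulli_pmf nu) (T t tau nu)))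
      = measure_pmf.expectation tau (cst th) + (\<Sum>t<n. measure_pmf.expectation tau (\<lambda>nu. measure_pmf.expectation (bernoulli_pmf nu) (T t tau nu)))"
    if "tau \<in> set_pmf (Pol [])" for tau
  proof -
    have bp: "bayes_plausible mu0 tau" using V that by (auto simp: valid_policy_def)
    have b1: "\<bar>cst th nu\<bar> \<le> 1" if "nu \<in> set_pmf tau" for nu
      using cst_bnd[OF th] bp_supp[OF bp that] by auto
    have b2: "\<bar>measure_pmf.expectation (bernoulli_pmf nu) (T t tau nu)\<bar> \<le> 1" for t nu
      using E_bnd[of "bernoulli_pmf nu" 0 "T t tau nu" 1] Tb by auto
    have b3: "\<bar>\<Sum>t<n. measure_pmf.expectation (bernoulli_pmf nu) (T t tau nu)\<bar> \<le> real n" for nu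
    proof -
      have "\<bar>\<Sum>t<n. measure_pmf.expectation (bernoulli_pmf nu) (T t tau nu)\<bar> \<le> (\<Sum>t<n. 1)"
        by (rule order_trans[OF sum_abs]) (rule sum_mono, rule b2)
      then show ?thesis by simp
    qed
    show ?thesis
      apply (subst E_add[where B=1 and B'="real n"])
        apply (rule b1, assumption, rule b3)
      apply (subst E_sum[where B=1])
       apply (rule b2)
      apply simp
      done
  qed
  have in3: "measure_pmf.expectation (Pol []) (\<lambda>tau. measure_pmf.expectation tau (cst th) + (\<Sum>t<n. measure_pmf.expectation tau (\<lambda>nu. measure_pmf.expectation (bernoulli_pmf nu) (T t tau nu))))
     = gP Pol th [] + (\<Sum>t<n. measure_pmf.expectation (Pol []) (\<lambda>tau. measure_pmf.expectation tau (\<lambda>nu. measure_pmf.expectation (bernoulli_pmf nu) (T t tau nu))))"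
  proof -
    have b1: "\<bar>measure_pmf.expectation tau (cst th)\<bar> \<le> 1" if "tau \<in> set_pmf (Pol [])" for tau
    proof -
      have bp: "bayes_plausible mu0 tau" using V that by (auto simp: valid_policy_def)
      show ?thesis using Ecst_bnd[OF bp th] by auto
    qed
    have b2: "\<bar>measure_pmf.expectation tau (\<lambda>nu. measure_pmf.expectation (bernoulli_pmf nu) (T t tau nu))\<bar> \<le> 1" for t tau
    proof -
      have "0 \<le> measure_pmf.expectation (bernoulli_pmf nu) (T t tau nu) \<and> measure_pmf.expectation (bernoulli_pmf nu) (T t tau nu) \<le> 1" for nu
        using E_bnd[of "bernoulli_pmf nu" 0 "T t tau nu" 1] Tb by auto
      then show ?thesis using E_bnd[of tau 0 _ 1] by (smt (verit, best))
    qed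
    have b3: "\<bar>\<Sum>t<n. measure_pmf.expectation tau (\<lambda>nu. measure_pmf.expectation (bernoulli_pmf nu) (T t tau nu))\<bar> \<le> real n" for tau
    proof -
      have "\<bar>\<Sum>t<n. measure_pmf.expectation tau (\<lambda>nu. measure_pmf.expectation (bernoulli_pmf nu) (T t tau nu))\<bar> \<le> (\<Sum>t<n. 1)"
        by (rule order_trans[OF sum_abs]) (rule sum_mono, rule b2)
      then show ?thesis by simp
    qed
    show ?thesis
      apply (subst E_add[where B=1 and B'="real n"])
        apply (rule b1, assumption, rule b3)
      apply (subst E_sum[where B=1])
       apply (rule b2)
      apply (simp add: gP_def)
      done
  qed
  have "JJ mu0 qhat alpha Pol th (Suc n) = gP Pol th [] + (\<Sum>t<n. measure_pmf.expectation (hist_dist mu0 qhat alpha Pol (Suc t)) (gP Pol th))"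
    unfolding JJ_def by (subst sum.lessThan_Suc_shift) (simp del: hist_dist.simps(2))
  also have "\<dots> = gP Pol th [] + (\<Sum>t<n. measure_pmf.expectation (Pol []) (\<lambda>tau. measure_pmf.expectation tau (\<lambda>nu. measure_pmf.expectation (bernoulli_pmf nu) (T t tau nu))))"
    by (simp only: step)
  also have "\<dots> = measure_pmf.expectation (Pol []) (\<lambda>tau. measure_pmf.expectation tau (\<lambda>nu. cst th nu + (\<Sum>t<n. measure_pmf.expectation (bernoulli_pmf nu) (T t tau nu))))"
    using in3 E_cong[of "Pol []", OF in2] by simp
  also have "\<dots> = measure_pmf.expectation (Pol []) (\<lambda>tau. measure_pmf.expectation tau (\<lambda>nu.
      measure_pmf.expectation (bernoulli_pmf nu) (\<lambda>omega. cst th nu + (\<Sum>t<n. T t tau nu omega))))"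
    by (simp add: in1)
  finally show ?thesis by (simp add: JJe)
qed

lemma ln_le_sqrt: assumes "(1::real) \<le> y" shows "ln y \<le> sqrt y"
proof -
  have s: "0 < sqrt y" using assms by simp
  have "ln (sqrt y) \<le> sqrt y / 2"
  proof -
    have "ln (sqrt y / 2) \<le> sqrt y / 2 - 1" using s by (intro ln_le_minus_one) simp
    moreover have "ln (sqrt y / 2) = ln (sqrt y) - ln 2" using s by (simp add: ln_div)
    moreover have "ln (2::real) \<le> 1" using ln_le_minus_one[of 2] by simp
    ultimately show ?thesis by linarith
  qed
  moreover have "ln y = 2 * ln (sqrt y)" using assms by (simp add: ln_sqrt)
  ultimately show ?thesis by linarith
qed

lemma one_le_ln3: "(1::real) \<le> ln 3"
proof -
  have "ln (exp 1) \<le> ln (3::real)" using exp_le by (subst ln_le_cancel_iff) auto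
  then show ?thesis by simp
qed

lemma Lam_ge1: fixes w :: real assumes "0 < w" "w \<le> 1/3" shows "ln (1 / w) \<ge> 1"
proof -
  have "3 \<le> 1 / w" using assms by (simp add: le_divide_eq)
  have "0 < 1/w" using assms(1) by simp
  then have "ln 3 \<le> ln (1/w)" using \<open>3 \<le> 1 / w\<close> by (simp only: ln_le_cancel_iff zero_less_numeral)
  then show ?thesis using one_le_ln3 by linarith
qed

lemma div_Lam_le: fixes x c L :: real assumes "x \<ge> 0" "c > 0" "L \<ge> 1" shows "c * x / L \<le> c * x"
proof -
  have "c * x \<ge> 0" using assms by simp
  then have "c * x * 1 \<le> c * x * L" by (rule mult_left_mono[OF assms(3)])
  then show ?thesis using assms(3) by (simp add: divide_le_eq)
qed

lemma ln_ratio_nonneg: fixes p q :: nat assumes "p \<ge> 1" shows "ln (real (p+q) / real p) \<ge> 0"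
proof -
  have "1 \<le> real (p+q) / real p" using assms by (simp add: le_divide_eq)
  then show ?thesis by simp
qed

lemma XP_bound:
  fixes p q :: nat and c L a :: real
  assumes "p \<ge> 1" "c > 0" "L \<ge> 1" "c \<le> a / 6"
  shows "real p * (c * ln (real (p+q) / real p) / L) \<le> real q * a / 6"
proof -
  have lnn: "ln (real (p+q) / real p) \<ge> 0" using ln_ratio_nonneg assms(1) by blast
  have "real p * (c * ln (real (p+q) / real p) / L) \<le> real p * (c * ln (real (p+q) / real p))"
    using div_Lam_le[OF lnn assms(2,3)] by (intro mult_left_mono) auto
  also have "\<dots> \<le> real p * (c * (real (p+q) / real p - 1))"
  proof -
    have "0 < real (p+q) / real p" using assms(1) by simp
    then have "ln (real (p+q) / real p) \<le> real (p+q) / real p - 1" by (rule ln_le_minus_one)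
    then show ?thesis using assms(2) by (intro mult_left_mono) auto
  qed
  also have "\<dots> = c * real q" using assms(1) by (simp add: field_simps)
  also have "\<dots> \<le> real q * a / 6"
  proof -
    have "real q * c \<le> real q * (a / 6)" using assms(4) by (intro mult_left_mono) auto
    then show ?thesis by (simp add: mult.commute)
  qed
  finally show ?thesis .
qed

lemma XQ_bound:
  fixes p q :: nat and c L a dl :: real
  assumes p1: "p \<ge> 1" and q1: "q \<ge> 1" and c: "c > 0" "c \<le> a / 6" "c \<le> 1/8"
    and dl: "dl > 0" and w3: "real (p+q) * dl \<le> 1/3" and L: "L = ln (1 / (real (p+q) * dl))"
  shows "real q * (c * ln (real (p+q) / real q) / L) \<le> real p * (real p - 1) * dl / 4 + real q * a / 2"
proof -
  define m where "m = p + q"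
  define w where "w = real m * dl"
  have mpos: "real m \<ge> 2" using p1 q1 m_def by simp
  have wpos: "0 < w" using w_def dl mpos by simp
  have w13: "w \<le> 1/3" using w3 w_def m_def by simp
  have L1: "L \<ge> 1" using Lam_ge1[OF wpos w13] L w_def m_def by simp
  have lnn: "ln (real m / real q) \<ge> 0" using ln_ratio_nonneg[of q p] q1 m_def by (simp add: add.commute)
  have pp: "real p * (real p - 1) * dl / 4 \<ge> 0" using p1 dl by simp
  show ?thesis
  proof (cases "c * ln (real m / real q) / L \<le> a / 2")
    case True
    have "real q * (c * ln (real m / real q) / L) \<le> real q * (a / 2)"
      using True by (intro mult_left_mono) auto
    then show ?thesis using pp m_def by simp
  next
    case False
    have big: "ln (real m / real q) > 3 * L"
    proof -
      have "a / 2 < c * ln (real m / real q) / L" using False by simp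
      then have "a / 2 * L < c * ln (real m / real q)" using L1 by (simp add: less_divide_eq)
      moreover have "3 * c * L \<le> a / 2 * L" using c L1 by (intro mult_right_mono) auto
      ultimately have "c * (3 * L) < c * ln (real m / real q)" by (simp add: algebra_simps)
      then show ?thesis using c(1) by (simp add: mult_less_cancel_left_pos)
    qed
    have "3 * L = ln (1 / w^3)" using L w_def m_def wpos by (simp add: ln_div ln_realpow)
    then have "ln (1 / w^3) < ln (real m / real q)" using big by simp
    moreover have "0 < 1 / w^3" using wpos by simp
    moreover have "0 < real m / real q" using q1 mpos by simp
    ultimately have "1 / w^3 < real m / real q" by (simp only: ln_less_cancel_iff)
    then have qsmall: "real q < real m * w^3" using wpos q1 by (simp add: field_simps)
    have "w^3 \<le> w^2" using wpos w13 by (simp add: power_decreasing)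
    then have "real m * w^3 \<le> real m * w^2" using mpos by (intro mult_left_mono) auto
    then have qsmall2: "real q \<le> real m * w^2" using qsmall by linarith
    have "real q * (c * ln (real m / real q) / L) \<le> real q * (c * ln (real m / real q))"
      using div_Lam_le[OF lnn c(1) L1] by (intro mult_left_mono) auto
    also have "\<dots> \<le> real q * (c * sqrt (real m / real q))"
    proof -
      have "1 \<le> real m / real q" using q1 m_def by (simp add: le_divide_eq)
      then have "ln (real m / real q) \<le> sqrt (real m / real q)" by (rule ln_le_sqrt)
      then show ?thesis using c(1) by (intro mult_left_mono) auto
    qed
    also have "\<dots> = c * sqrt (real q * real m)"
    proof -
      have "real q * real m = real q * real q * (real m / real q)" using q1 by (simp add: field_simps)
      then have "sqrt (real q * real m) = sqrt (real q * real q * (real m / real q))" by (rule arg_cong)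
      also have "\<dots> = real q * sqrt (real m / real q)" by (subst real_sqrt_mult) simp
      finally show ?thesis by simp
    qed
    also have "\<dots> \<le> c * (real m * w)"
    proof -
      have "real q * real m \<le> real m * w^2 * real m" using qsmall2 mpos by (intro mult_right_mono) auto
      also have "\<dots> = (real m * w)^2" by (simp add: power2_eq_square)
      finally have "sqrt (real q * real m) \<le> sqrt ((real m * w)^2)" by (rule real_sqrt_le_mono)
      also have "\<dots> = real m * w" using wpos mpos by simp
      finally show ?thesis using c(1) by (intro mult_left_mono) auto
    qed
    also have "\<dots> \<le> real m * real m * dl / 8"
    proof -
      have "c * (real m * w) = c * (real m * real m * dl)" using w_def by simp
      also have "\<dots> \<le> 1/8 * (real m * real m * dl)" using c(3) dl by (intro mult_right_mono) auto
      finally show ?thesis by simp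
    qed
    also have "\<dots> \<le> real p * (real p - 1) * dl / 4"
    proof -
      have "w^3 \<le> (1/3)^3" using wpos w13 by (intro power_mono) auto
      then have "w^3 \<le> 1/27" by (simp add: power_divide)
      then have "real m * w^3 \<le> real m * (1/27)" using mpos by (intro mult_left_mono) auto
      then have q27: "real q < real m / 27" using qsmall by linarith
      have pm: "real p > 26 * real m / 27" using q27 m_def by simp
      have m27: "real m > 27" using q27 q1 by linarith
      have a1: "real p - 1 \<ge> real m * (9/10)" using pm m27 by linarith
      have a2: "real p \<ge> real m * (9/10)" using pm mpos by linarith
      have "(real m * (9/10)) * (real m * (9/10)) \<le> real p * (real p - 1)"
        using a1 a2 mpos by (intro mult_mono) auto
      moreover have "0 \<le> real m * real m" by simp
      moreover have "(real m * (9/10)) * (real m * (9/10)) = 81/100 * (real m * real m)" by (simp add: algebra_simps)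
      ultimately have "real m * real m \<le> 2 * (real p * (real p - 1))" by linarith
      then have "real m * real m * dl \<le> 2 * (real p * (real p - 1)) * dl" using dl by (intro mult_right_mono) auto
      then show ?thesis by (simp add: algebra_simps)
    qed
    finally have "real q * (c * ln (real m / real q) / L) \<le> real p * (real p - 1) * dl / 4" .
    moreover have "real q * a / 2 \<ge> 0" using c q1 by simp
    ultimately have "real q * (c * ln (real m / real q) / L) \<le> real p * (real p - 1) * dl / 4 + real q * a / 2" by linarith
    then show ?thesis unfolding m_def .
  qed
qed

lemma PW:
  fixes p q :: nat and A nu lam Fm Fp Fq a dl c :: real
  assumes m1: "p + q \<ge> 1"
    and A: "A \<ge> real p * (real p - 1) * dl / 2"
    and nu: "0 \<le> nu" "nu \<le> 1" "p > 0 \<Longrightarrow> q > 0 \<Longrightarrow> a \<le> nu"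
    and lam: "0 \<le> lam" "lam \<le> (real (p+q) - 1) * dl / 4"
    and Fq0: "q = 0 \<Longrightarrow> Fp = Fm" and Fp0: "p = 0 \<Longrightarrow> Fq = Fm"
    and Xp: "p > 0 \<Longrightarrow> Fm - Fp \<le> c * ln (real (p+q) / real p) / ln (1 / (real (p+q) * dl))"
    and Xq: "q > 0 \<Longrightarrow> Fm - Fq \<le> c * ln (real (p+q) / real q) / ln (1 / (real (p+q) * dl))"
    and w: "real (p+q) * dl \<le> a / 2" "real (p+q) * dl \<le> 1/3" "dl > 0"
    and c: "0 < c" "c \<le> a / 6" "c \<le> 1/8"
  shows "A + real q * nu + real p * Fp + real q * Fq \<ge> real (p+q) * Fm + real (p+q) * lam * nu"
proof -
  define m where "m = p + q"
  have mpos: "real m \<ge> 1" using m1 m_def by simp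
  have lamm: "lam \<le> (real m - 1) * dl / 4" using lam m_def by simp
  have wm: "real m * dl \<le> a / 2" "real m * dl \<le> 1/3" using w m_def by auto
  have lam1: "lam \<le> 1"
  proof -
    have "(real m - 1) * dl / 4 \<le> real m * dl" using w(3) mpos by (simp add: field_simps)
    then show ?thesis using lamm wm(2) by linarith
  qed
  have lnu: "lam * nu \<le> lam" using lam(1) nu(2) by (simp add: mult_left_le)
  have Ag: "A \<ge> 0"
  proof -
    have "real p * (real p - 1) \<ge> 0" by (cases p) auto
    then have "real p * (real p - 1) * dl / 2 \<ge> 0" using w(3) by simp
    then show ?thesis using A by linarith
  qed
  show ?thesis
  proof (cases "p = 0")
    case True
    have "lam * nu \<le> nu" using lam1 nu lam by (simp add: mult_left_le_one_le)
    then have "real q * (lam * nu) \<le> real q * nu" by (intro mult_left_mono) auto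
    moreover have "Fq = Fm" using Fp0 True by simp
    ultimately show ?thesis using True Ag by (simp add: algebra_simps)
  next
    case pn: False
    show ?thesis
    proof (cases "q = 0")
      case True
      have pm: "real p = real m" using True m_def by simp
      have "real m * (lam * nu) \<le> real m * lam" using lnu mpos by (intro mult_left_mono) auto
      also have "\<dots> \<le> real m * ((real m - 1) * dl / 4)" using lamm mpos by (intro mult_left_mono) auto
      also have "\<dots> \<le> real m * (real m - 1) * dl / 2"
      proof -
        have "real m * (real m - 1) * dl \<ge> 0" using mpos w(3) by simp
        moreover have "real m * ((real m - 1) * dl / 4) = real m * (real m - 1) * dl / 4" by simp
        ultimately show ?thesis by linarith
      qed
      also have "\<dots> \<le> A" using A pm by simp
      finally have "real m * (lam * nu) \<le> A" .
      moreover have "Fp = Fm" using Fq0 True by simp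
      ultimately show ?thesis using True m_def by (simp add: algebra_simps)
    next
      case qn: False
      have p1: "p \<ge> 1" "q \<ge> 1" using pn qn by auto
      have nua: "a \<le> nu" using nu(3) pn qn by auto
      have mm: "real m * (real m - 1) \<le> real p * (real p - 1) + 2 * real q * real m"
        using m_def by (simp add: algebra_simps)
      have "real m * (lam * nu) \<le> real m * lam" using lnu mpos by (intro mult_left_mono) auto
      also have "\<dots> \<le> real m * ((real m - 1) * dl / 4)" using lamm mpos by (intro mult_left_mono) auto
      also have "\<dots> = (real m * (real m - 1)) * dl / 4" by simp
      also have "\<dots> \<le> (real p * (real p - 1) + 2 * real q * real m) * dl / 4"
        using mm w(3) by (intro divide_right_mono mult_right_mono) auto
      also have "\<dots> = real p * (real p - 1) * dl / 4 + real q * (real m * dl) / 2" by (simp add: field_simps)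
      also have "\<dots> \<le> real p * (real p - 1) * dl / 4 + real q * (a / 2) / 2"
      proof -
        have "real q * (real m * dl) \<le> real q * (a / 2)" using wm(1) by (intro mult_left_mono) auto
        then show ?thesis by (simp add: mult.commute mult.left_commute)
      qed
      finally have LT: "real m * (lam * nu) \<le> real p * (real p - 1) * dl / 4 + real q * a / 4" by simp
      have XP: "real p * (Fm - Fp) \<le> real q * a / 6"
      proof -
        have "real p * (Fm - Fp) \<le> real p * (c * ln (real (p+q) / real p) / ln (1 / (real (p+q) * dl)))"
          using Xp pn by (intro mult_left_mono) auto
        also have "\<dots> \<le> real q * a / 6"
          using XP_bound[OF p1(1) c(1) _ c(2)] Lam_ge1[of "real (p+q) * dl"] w mpos m_def by simp
        finally show ?thesis .
      qed
      have XQ: "real q * (Fm - Fq) \<le> real p * (real p - 1) * dl / 4 + real q * a / 2"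
      proof -
        have "real q * (Fm - Fq) \<le> real q * (c * ln (real (p+q) / real q) / ln (1 / (real (p+q) * dl)))"
          using Xq qn by (intro mult_left_mono) auto
        also have "\<dots> \<le> real p * (real p - 1) * dl / 4 + real q * a / 2"
          by (rule XQ_bound[OF p1 c w(3,2) refl])
        finally show ?thesis .
      qed
      have qa: "real q * nu \<ge> real q * a" using nua by (simp add: mult_left_mono)
      have qa0: "real q * a \<ge> 0" using c by simp
      have eq: "real m * Fm = real p * Fm + real q * Fm" using m_def by (simp add: algebra_simps)
      have XP': "real p * Fm - real p * Fp \<le> real q * a / 6" using XP by (simp add: right_diff_distrib)
      have XQ': "real q * Fm - real q * Fq \<le> real p * (real p - 1) * dl / 4 + real q * a / 2"
        using XQ by (simp add: right_diff_distrib)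
      have "real m * Fm + real m * (lam * nu) \<le> A + real q * nu + real p * Fp + real q * Fq"
        using LT XP' XQ' A qa qa0 eq by linarith
      then show ?thesis using m_def by (simp add: algebra_simps)
    qed
  qed
qed

definition Fpot :: "real \<Rightarrow> real \<Rightarrow> nat \<Rightarrow> nat \<Rightarrow> real" where
  "Fpot c dl k n = c * max 0 (ln (ln (real n + 3)) - ln (ln (1 / (real k * dl))))"

lemma Fpot_nonneg: "c \<ge> 0 \<Longrightarrow> Fpot c dl k n \<ge> 0"
  unfolding Fpot_def by simp

lemma lnln_mono: fixes x y :: real assumes "3 \<le> x" "x \<le> y" shows "ln (ln x) \<le> ln (ln y)"
proof -
  have "1 \<le> ln x" using Lam_ge1[of "1/x"] assms by (simp add: divide_simps)
  moreover have "ln x \<le> ln y" using assms by (subst ln_le_cancel_iff) auto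
  ultimately show ?thesis by (subst ln_le_cancel_iff) auto
qed

lemma Fpot_mono: assumes "c \<ge> 0" "n \<le> n'" shows "Fpot c dl k n \<le> Fpot c dl k n'"
proof -
  have h: "ln (ln (real n + 3)) \<le> ln (ln (real n' + 3))" using assms(2) by (intro lnln_mono) auto
  have "max 0 (ln (ln (real n + 3)) - ln (ln (1 / (real k * dl)))) \<le> max 0 (ln (ln (real n' + 3)) - ln (ln (1 / (real k * dl))))"
    using h by (intro max.mono) auto
  then show ?thesis unfolding Fpot_def using assms(1) by (rule mult_left_mono)
qed

lemma max_diff_le: fixes G h1 h2 :: real assumes "h2 \<le> h1" shows "max 0 (G - h2) - max 0 (G - h1) \<le> h1 - h2"
  using assms by (simp add: max_def)

lemma max_diff_le2: fixes a b h :: real assumes "a \<le> b" shows "max 0 (b - h) - max 0 (a - h) \<le> b - a"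
  using assms by (simp add: max_def)

lemma lnln_diff: fixes x y :: real assumes "3 \<le> x" "x \<le> y"
  shows "ln (ln y) - ln (ln x) \<le> ln (y / x) / ln x"
proof -
  have lx: "1 \<le> ln x" using Lam_ge1[of "1/x"] assms by (simp add: divide_simps)
  have ly: "ln x \<le> ln y" using assms by (subst ln_le_cancel_iff) auto
  have "ln (ln y) - ln (ln x) = ln (ln y / ln x)" using lx ly by (simp add: ln_div)
  also have "\<dots> \<le> ln y / ln x - 1" using lx ly by (intro ln_le_minus_one) auto
  also have "\<dots> = (ln y - ln x) / ln x" using lx by (simp add: field_simps)
  also have "\<dots> = ln (y / x) / ln x" using assms by (simp add: ln_div)
  finally show ?thesis .
qed

lemma Fpot_diff:
  fixes k m :: nat
  assumes "1 \<le> k" "k \<le> m" "dl > 0" "real m * dl \<le> 1/3" "c > 0"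
  shows "Fpot c dl m n - Fpot c dl k n \<le> c * ln (real m / real k) / ln (1 / (real m * dl))"
proof -
  have x3: "3 \<le> 1 / (real m * dl)" using assms by (simp add: le_divide_eq)
  have xy: "1 / (real m * dl) \<le> 1 / (real k * dl)" using assms by (simp add: frac_le)
  have h: "ln (ln (1 / (real m * dl))) \<le> ln (ln (1 / (real k * dl)))" by (rule lnln_mono[OF x3 xy])
  have "Fpot c dl m n - Fpot c dl k n = c * (max 0 (ln (ln (real n + 3)) - ln (ln (1 / (real m * dl))))
      - max 0 (ln (ln (real n + 3)) - ln (ln (1 / (real k * dl)))))"
    unfolding Fpot_def by (simp add: right_diff_distrib)
  also have "\<dots> \<le> c * (ln (ln (1 / (real k * dl))) - ln (ln (1 / (real m * dl))))"
    using max_diff_le[OF h] assms(5) by (intro mult_left_mono) auto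
  also have "\<dots> \<le> c * (ln ((1 / (real k * dl)) / (1 / (real m * dl))) / ln (1 / (real m * dl)))"
    using lnln_diff[OF x3 xy] assms(5) by (intro mult_left_mono) auto
  also have "(1 / (real k * dl)) / (1 / (real m * dl)) = real m / real k" using assms by (simp add: field_simps)
  finally show ?thesis by simp
qed

lemma Fpot_one: assumes "dl > 0" "dl \<le> 1 / (real n + 3)" shows "Fpot c dl 1 n = 0"
proof -
  have "real n + 3 \<le> 1 / dl" using assms by (simp add: le_divide_eq field_simps)
  then have "ln (ln (real n + 3)) \<le> ln (ln (1 / dl))" by (intro lnln_mono) auto
  then show ?thesis unfolding Fpot_def by simp
qed

lemma Fpot_inc:
  fixes m n :: nat
  assumes m1: "1 \<le> m" and dl: "dl > 0" "real m * dl \<le> 1/3" "dl \<le> 1 / (real n + 4)"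
    and c: "0 < c" "c \<le> mu0 / 16"
  shows "Fpot c dl m (Suc n) - Fpot c dl m n \<le> mu0 * (real m - 1) * dl / 4"
proof -
  have mu0: "mu0 > 0" using c by simp
  show ?thesis
  proof (cases "ln (ln (real (Suc n) + 3)) \<le> ln (ln (1 / (real m * dl)))")
    case True
    then have "Fpot c dl m (Suc n) = 0" unfolding Fpot_def by simp
    moreover have "Fpot c dl m n \<ge> 0" using c by (simp add: Fpot_nonneg)
    moreover have "mu0 * (real m - 1) * dl / 4 \<ge> 0" using m1 mu0 dl by simp
    ultimately show ?thesis by linarith
  next
    case False
    have x3: "3 \<le> 1 / (real m * dl)" using dl m1 by (simp add: le_divide_eq)
    have "real n + 4 > 1 / (real m * dl)"
    proof (rule ccontr)
      assume "\<not> ?thesis"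
      then have "ln (ln (real (Suc n) + 3)) \<le> ln (ln (1 / (real m * dl)))"
        by (intro lnln_mono) (auto simp: add.commute)
      then show False using False by simp
    qed
    then have big: "1 < (real n + 4) * (real m * dl)" using dl m1 by (simp add: divide_less_eq)
    have m2: "m \<ge> 2"
    proof (rule ccontr)
      assume "\<not> ?thesis"
      then have "m = 1" using m1 by simp
      then have "(real n + 4) * (real m * dl) \<le> 1" using dl(1,3) by (simp add: le_divide_eq field_simps)
      then show False using big by simp
    qed
    have "Fpot c dl m (Suc n) - Fpot c dl m n \<le> c * (ln (ln (real n + 4)) - ln (ln (real n + 3)))"
    proof -
      have h: "ln (ln (real n + 3)) \<le> ln (ln (real n + 4))" by (intro lnln_mono) auto
      have "max 0 (ln (ln (real n + 4)) - ln (ln (1 / (real m * dl)))) - max 0 (ln (ln (real n + 3)) - ln (ln (1 / (real m * dl))))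
          \<le> ln (ln (real n + 4)) - ln (ln (real n + 3))" by (rule max_diff_le2[OF h])
      then have "c * (max 0 (ln (ln (real n + 4)) - ln (ln (1 / (real m * dl)))) - max 0 (ln (ln (real n + 3)) - ln (ln (1 / (real m * dl)))))
          \<le> c * (ln (ln (real n + 4)) - ln (ln (real n + 3)))" using c by (intro mult_left_mono) auto
      moreover have "real (Suc n) + 3 = real n + 4" by simp
      ultimately show ?thesis unfolding Fpot_def by (simp only: right_diff_distrib)
    qed
    also have "\<dots> \<le> c * (ln ((real n + 4) / (real n + 3)) / ln (real n + 3))"
      using lnln_diff[of "real n + 3" "real n + 4"] c by (intro mult_left_mono) auto
    also have "\<dots> \<le> c * (1 / (real n + 3))"
    proof -
      have l1: "1 \<le> ln (real n + 3)" using Lam_ge1[of "1/(real n + 3)"] by simp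
      have "ln ((real n + 4) / (real n + 3)) \<le> (real n + 4) / (real n + 3) - 1" by (intro ln_le_minus_one) auto
      also have "\<dots> = 1 / (real n + 3)" by (simp add: field_simps)
      finally have a: "ln ((real n + 4) / (real n + 3)) \<le> 1 / (real n + 3)" .
      have "0 \<le> ln ((real n + 4) / (real n + 3))" by simp
      then have "ln ((real n + 4) / (real n + 3)) / ln (real n + 3) \<le> ln ((real n + 4) / (real n + 3))"
        using l1 by (simp add: divide_le_eq)
      then show ?thesis using a c by (intro mult_left_mono) auto
    qed
    also have "\<dots> \<le> c * (2 * (real m * dl))"
    proof -
      have "1 / (real n + 3) \<le> 2 / (real n + 4)" by (simp add: field_simps)
      also have "\<dots> < 2 * (real m * dl)" using big by (simp add: field_simps)
      finally show ?thesis using c by (intro mult_left_mono) auto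
    qed
    also have "\<dots> \<le> mu0 / 16 * (2 * (real m * dl))" using c dl m1 by (intro mult_right_mono) auto
    also have "\<dots> \<le> mu0 * (real m - 1) * dl / 4"
    proof -
      have "real m \<le> 2 * (real m - 1)" using m2 by simp
      then have "mu0 * dl * real m \<le> mu0 * dl * (2 * (real m - 1))" using mu0 dl by (intro mult_left_mono) auto
      then show ?thesis by (simp add: field_simps)
    qed
    finally show ?thesis .
  qed
qed

definition thg :: "real \<Rightarrow> real \<Rightarrow> nat \<Rightarrow> real" where "thg qhat dl i = qhat + real i * dl"
definition alg :: "real \<Rightarrow> real \<Rightarrow> real \<Rightarrow> nat \<Rightarrow> real" where
  "alg mu0 qhat dl i = (qhat - mu0) / (thg qhat dl i - mu0)"

lemma acts_iff:
  assumes "mu0 < qhat" "qhat \<le> th"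
  shows "acts1 mu0 qhat ((qhat - mu0) / (th - mu0)) nu \<longleftrightarrow> th \<le> nu"
proof -
  define al where "al = (qhat - mu0) / (th - mu0)"
  have D: "th - mu0 > 0" using assms by simp
  have alpos: "al > 0" using assms D al_def by simp
  have "(1 - al) * mu0 + al * nu - qhat = al * (nu - th)"
  proof -
    have "al * (th - mu0) = qhat - mu0" using D al_def by simp
    then show ?thesis by (simp add: algebra_simps)
  qed
  then have "acts1 mu0 qhat al nu \<longleftrightarrow> 0 \<le> al * (nu - th)" unfolding acts1_def by linarith
  also have "\<dots> \<longleftrightarrow> th \<le> nu" using alpos by (simp add: zero_le_mult_iff)
  finally show ?thesis using al_def by simp
qed

lemma split_interval:
  fixes P :: "nat \<Rightarrow> bool"
  assumes down: "\<And>i j. i \<le> j \<Longrightarrow> P j \<Longrightarrow> P i" and lr: "l \<le> r"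
  shows "\<exists>k. l \<le> k \<and> k \<le> r \<and> (\<forall>i\<in>{l..<r}. P i \<longleftrightarrow> i < k)"
  using lr
proof (induction r)
  case 0
  then show ?case by auto
next
  case (Suc r)
  show ?case
  proof (cases "l = Suc r")
    case True
    then show ?thesis by auto
  next
    case False
    then have lr: "l \<le> r" using Suc.prems by simp
    from Suc.IH[OF lr] obtain k where k: "l \<le> k" "k \<le> r" "\<forall>i\<in>{l..<r}. P i \<longleftrightarrow> i < k" by blast
    show ?thesis
    proof (cases "P r")
      case True
      have "\<forall>i\<in>{l..<Suc r}. P i \<longleftrightarrow> i < Suc r"
      proof
        fix i assume "i \<in> {l..<Suc r}"
        then have "i \<le> r" by auto
        then show "P i \<longleftrightarrow> i < Suc r" using down[OF _ True] by auto
      qed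
      then show ?thesis using lr by (intro exI[of _ "Suc r"]) auto
    next
      case F: False
      have "k \<le> r" by (rule k(2))
      have "\<forall>i\<in>{l..<Suc r}. P i \<longleftrightarrow> i < k"
      proof
        fix i assume i: "i \<in> {l..<Suc r}"
        show "P i \<longleftrightarrow> i < k"
        proof (cases "i = r")
          case True
          then show ?thesis using F k(2) by auto
        next
          case False
          then show ?thesis using i k(3) by auto
        qed
      qed
      then show ?thesis using k by (intro exI[of _ k]) auto
    qed
  qed
qed

lemma sum_gap:
  fixes x a dl :: real
  shows "(\<Sum>i\<in>{l..<l+p}. (x - (a + real i * dl))) = real p * (x - a - real l * dl) - dl * (real p * (real p - 1) / 2)"
proof (induction p)
  case 0
  then show ?case by simp
next
  case (Suc p)
  have "(\<Sum>i\<in>{l..<l+Suc p}. (x - (a + real i * dl))) = (\<Sum>i\<in>{l..<l+p}. (x - (a + real i * dl))) + (x - (a + real (l+p) * dl))"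
    by simp
  also have "\<dots> = real (Suc p) * (x - a - real l * dl) - dl * (real (Suc p) * (real (Suc p) - 1) / 2)"
    using Suc by (simp add: field_simps)
  finally show ?case .
qed

lemma sum_gap_bound:
  fixes x a dl :: real
  assumes "dl > 0" "p \<ge> 1" "x \<ge> a + real (l + p - 1) * dl"
  shows "(\<Sum>i\<in>{l..<l+p}. (x - (a + real i * dl))) \<ge> real p * (real p - 1) * dl / 2"
proof -
  have "x - a - real l * dl \<ge> (real p - 1) * dl" using assms by (simp add: algebra_simps of_nat_diff)
  then have "real p * (x - a - real l * dl) \<ge> real p * ((real p - 1) * dl)" by (intro mult_left_mono) auto
  then show ?thesis unfolding sum_gap by (simp add: algebra_simps)
qed

lemma Fpot_zero: assumes "1 \<le> m" "dl > 0" "real m * dl \<le> 1/3" shows "Fpot c dl m 0 = 0"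
proof -
  have "3 \<le> 1 / (real m * dl)" using assms by (simp add: le_divide_eq)
  then have "ln (ln (real 0 + 3)) \<le> ln (ln (1 / (real m * dl)))" by (intro lnln_mono) auto
  then show ?thesis unfolding Fpot_def by simp
qed

lemma E_lin:
  assumes "bayes_plausible mu0 tau"
  shows "measure_pmf.expectation tau (\<lambda>nu. C + D * nu) = C + D * mu0"
proof -
  have b: "\<And>nu. nu \<in> set_pmf tau \<Longrightarrow> \<bar>nu\<bar> \<le> 1" using bp_supp[OF assms] by fastforce
  have i: "integrable (measure_pmf tau) (\<lambda>nu. nu)" by (rule int_bnd[OF b])
  have "measure_pmf.expectation tau (\<lambda>nu. C + D * nu) = C + D * measure_pmf.expectation tau (\<lambda>nu. nu)"
    using i by simp
  then show ?thesis using assms by (simp add: bayes_plausible_def)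
qed

lemma E_ge:
  fixes f :: "'a \<Rightarrow> real"
  assumes "\<And>x. x \<in> set_pmf M \<Longrightarrow> lo \<le> f x" "\<And>x. x \<in> set_pmf M \<Longrightarrow> \<bar>f x\<bar> \<le> B"
  shows "lo \<le> measure_pmf.expectation M f"
proof -
  have i: "integrable (measure_pmf M) f" by (rule int_bnd[OF assms(2)])
  show ?thesis using measure_pmf.integral_ge_const[OF i, of lo] assms(1) by (auto intro!: AE_pmfI)
qed

lemma main_ind:
  assumes mu: "0 < mu0" "mu0 < qhat"
    and dl: "dl > 0" "real Nn * dl \<le> qhat / 2" "real Nn * dl \<le> 1/3" "qhat + real Nn * dl \<le> 1"
       "dl \<le> 1 / (real T + 3)"
    and c: "0 < c" "c \<le> qhat / 6" "c \<le> 1/8" "c \<le> mu0 / 16"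
  shows "n \<le> T \<Longrightarrow> valid_policy mu0 Pol \<Longrightarrow> l < r \<Longrightarrow> r \<le> Nn \<Longrightarrow>
    real (r - l) * Fpot c dl (r - l) n \<le> (\<Sum>i\<in>{l..<r}. JJ mu0 qhat (alg mu0 qhat dl i) Pol (thg qhat dl i) n)"
proof (induction n arbitrary: Pol l r)
  case 0
  have "Fpot c dl (r - l) 0 = 0"
  proof (rule Fpot_zero)
    show "1 \<le> r - l" using 0 by simp
    show "dl > 0" by (rule dl(1))
    have "real (r - l) \<le> real Nn" using 0 by simp
    then have "real (r - l) * dl \<le> real Nn * dl" using dl(1) by (intro mult_right_mono) auto
    then show "real (r - l) * dl \<le> 1/3" using dl(3) by linarith
  qed
  then show ?case by (simp add: JJ_def)
next
  case (Suc n)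
  define th where "th = thg qhat dl"
  define al where "al = alg mu0 qhat dl"
  define m where "m = r - l"
  have thi: "qhat \<le> th i \<and> th i \<le> 1" if "i < Nn" for i
  proof -
    have "real i * dl \<le> real Nn * dl" using that dl(1) by (intro mult_right_mono) auto
    moreover have "th i = qhat + real i * dl" by (simp add: th_def thg_def)
    moreover have "real i * dl \<ge> 0" using dl(1) by simp
    ultimately show ?thesis using dl(4) by linarith
  qed
  have th0: "0 \<le> th i \<and> th i \<le> 1" if "i < Nn" for i using thi[OF that] mu by simp
  have actsi: "acts1 mu0 qhat (al i) nu \<longleftrightarrow> th i \<le> nu" if "i < Nn" for i nu
    unfolding al_def alg_def th_def[symmetric] using acts_iff[OF mu(2)] thi[OF that] by blast
  have V: "valid_policy mu0 Pol" by (rule Suc.prems(2))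
  have mpos: "m \<ge> 1" using Suc.prems m_def by simp
  have mN: "real m * dl \<le> real Nn * dl" using Suc.prems(4) m_def dl(1) by (intro mult_right_mono) auto
  define G where "G = (\<lambda>i tau nu omega. cst (th i) nu +
      JJ mu0 qhat (al i) (\<lambda>h. Pol ((tau, omega, nu, acts1 mu0 qhat (al i) nu) # h)) (th i) n)"
  have Gb: "0 \<le> G i tau nu omega \<and> G i tau nu omega \<le> real n + 1" if "i < Nn" "0 \<le> nu" "nu \<le> 1" for i tau nu omega
  proof -
    have "0 \<le> cst (th i) nu \<and> cst (th i) nu \<le> 1" using cst_bnd th0[OF that(1)] that(2,3) by blast
    moreover have "0 \<le> JJ mu0 qhat (al i) (\<lambda>h. Pol ((tau, omega, nu, acts1 mu0 qhat (al i) nu) # h)) (th i) n \<and>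
      JJ mu0 qhat (al i) (\<lambda>h. Pol ((tau, omega, nu, acts1 mu0 qhat (al i) nu) # h)) (th i) n \<le> real n"
      using JJ_bnd[OF valid_shift[OF V]] th0[OF that(1)] by blast
    ultimately show ?thesis unfolding G_def by linarith
  qed
  define lam where "lam = (Fpot c dl m (Suc n) - Fpot c dl m n) / mu0"
  have PWb: "real m * Fpot c dl m n + real m * lam * nu \<le> (\<Sum>i\<in>{l..<r}. G i tau nu omega)"
    if nu: "0 \<le> nu" "nu \<le> 1" for tau nu omega
  proof -
    have down: "\<And>i j. i \<le> j \<Longrightarrow> th j \<le> nu \<Longrightarrow> th i \<le> nu"
    proof -
      fix i j :: nat assume "i \<le> j" "th j \<le> nu"
      moreover have "real i * dl \<le> real j * dl" using \<open>i \<le> j\<close> dl(1) by (intro mult_right_mono) auto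
      ultimately show "th i \<le> nu" unfolding th_def thg_def by linarith
    qed
    have "\<exists>k. l \<le> k \<and> k \<le> r \<and> (\<forall>i\<in>{l..<r}. th i \<le> nu \<longleftrightarrow> i < k)"
      apply (rule split_interval[where P="\<lambda>i. th i \<le> nu"])
       apply (erule down, assumption)
      using Suc.prems(3) apply simp
      done
    then obtain k where k: "l \<le> k" "k \<le> r" "\<forall>i\<in>{l..<r}. th i \<le> nu \<longleftrightarrow> i < k" by blast
    define p where "p = k - l"
    define q where "q = r - k"
    have mpq: "m = p + q" using k Suc.prems(3) m_def p_def q_def by simp
    have kp: "k = l + p" using k p_def by simp
    have ltN: "i < Nn" if "i \<in> {l..<r}" for i using that Suc.prems(4) by auto
    have split: "(\<Sum>i\<in>{l..<r}. G i tau nu omega) = (\<Sum>i\<in>{l..<k}. G i tau nu omega) + (\<Sum>i\<in>{k..<r}. G i tau nu omega)"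
      using k by (simp add: sum.atLeastLessThan_concat)
    define PT where "PT = (\<lambda>h. Pol ((tau, omega, nu, True) # h))"
    define PF where "PF = (\<lambda>h. Pol ((tau, omega, nu, False) # h))"
    have VT: "valid_policy mu0 PT" unfolding PT_def by (rule valid_shift[OF V])
    have VF: "valid_policy mu0 PF" unfolding PF_def by (rule valid_shift[OF V])
    have G1: "G i tau nu omega = (nu - th i) + JJ mu0 qhat (al i) PT (th i) n" if "i \<in> {l..<k}" for i
    proof -
      have iin: "i \<in> {l..<r}" using that k by auto
      have "th i \<le> nu" using k(3) iin that by auto
      moreover have "acts1 mu0 qhat (al i) nu" using actsi[OF ltN[OF iin]] \<open>th i \<le> nu\<close> by simp
      ultimately show ?thesis unfolding G_def PT_def cst_def by simp
    qed
    have G2: "G i tau nu omega = nu + JJ mu0 qhat (al i) PF (th i) n" if "i \<in> {k..<r}" for i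
    proof -
      have iin: "i \<in> {l..<r}" using that k by auto
      have "\<not> th i \<le> nu" using k(3) iin that by auto
      moreover have "\<not> acts1 mu0 qhat (al i) nu" using actsi[OF ltN[OF iin]] \<open>\<not> th i \<le> nu\<close> by simp
      ultimately show ?thesis unfolding G_def PF_def cst_def by simp
    qed
    define A where "A = (\<Sum>i\<in>{l..<k}. (nu - th i))"
    have S1: "(\<Sum>i\<in>{l..<k}. G i tau nu omega) = A + (\<Sum>i\<in>{l..<k}. JJ mu0 qhat (al i) PT (th i) n)"
      unfolding A_def by (simp add: G1 sum.distrib)
    have S2: "(\<Sum>i\<in>{k..<r}. G i tau nu omega) = real q * nu + (\<Sum>i\<in>{k..<r}. JJ mu0 qhat (al i) PF (th i) n)"
      using k by (simp add: G2 sum.distrib q_def)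
    have IT: "real p * Fpot c dl p n \<le> (\<Sum>i\<in>{l..<k}. JJ mu0 qhat (al i) PT (th i) n)"
    proof (cases "l < k")
      case True
      have "real (k - l) * Fpot c dl (k - l) n \<le> (\<Sum>i\<in>{l..<k}. JJ mu0 qhat (alg mu0 qhat dl i) PT (thg qhat dl i) n)"
        using Suc.IH[OF _ VT True] Suc.prems(1,4) k by simp
      then show ?thesis using p_def al_def th_def by simp
    next
      case False
      then show ?thesis using k p_def by simp
    qed
    have IF: "real q * Fpot c dl q n \<le> (\<Sum>i\<in>{k..<r}. JJ mu0 qhat (al i) PF (th i) n)"
    proof (cases "k < r")
      case True
      have "real (r - k) * Fpot c dl (r - k) n \<le> (\<Sum>i\<in>{k..<r}. JJ mu0 qhat (alg mu0 qhat dl i) PF (thg qhat dl i) n)"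
        using Suc.IH[OF _ VF True] Suc.prems(1,4) k by simp
      then show ?thesis using q_def al_def th_def by simp
    next
      case False
      then show ?thesis using k q_def by simp
    qed
    have Ab: "A \<ge> real p * (real p - 1) * dl / 2"
    proof (cases "p = 0")
      case True
      then show ?thesis using A_def kp by simp
    next
      case False
      have "k - 1 \<in> {l..<r}" using False kp k by auto
      then have "th (k - 1) \<le> nu" using k(3) False kp by auto
      then have "nu \<ge> qhat + real (l + p - 1) * dl" using kp th_def thg_def by simp
      then show ?thesis unfolding A_def kp th_def thg_def
        by (intro sum_gap_bound[OF dl(1)]) (use False in auto)
    qed
    have lam0: "0 \<le> lam" unfolding lam_def using Fpot_mono[of c n "Suc n"] c(1) mu(1) by simp
    have lam1: "lam \<le> (real (p+q) - 1) * dl / 4"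
    proof -
      have "dl \<le> 1 / (real n + 4)"
      proof -
        have "real n + 4 \<le> real T + 3" using Suc.prems(1) by simp
        then have "1 / (real T + 3) \<le> 1 / (real n + 4)" by (intro divide_left_mono) auto
        then show ?thesis using dl(5) by linarith
      qed
      then have "Fpot c dl m (Suc n) - Fpot c dl m n \<le> mu0 * (real m - 1) * dl / 4"
        using Fpot_inc[OF mpos dl(1) _ _ c(1) c(4)] mN dl(3) by simp
      then have "(Fpot c dl m (Suc n) - Fpot c dl m n) / mu0 \<le> (mu0 * (real m - 1) * dl / 4) / mu0"
        using mu(1) by (intro divide_right_mono) auto
      also have "\<dots> = (real m - 1) * dl / 4" using mu(1) by simp
      finally show ?thesis unfolding lam_def using mpq by simp
    qed
    have nua: "p > 0 \<Longrightarrow> q > 0 \<Longrightarrow> qhat \<le> nu"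
    proof -
      assume "p > 0" "q > 0"
      then have "l \<in> {l..<r}" "l < k" using kp k by auto
      then have "th l \<le> nu" using k(3) by auto
      then show "qhat \<le> nu" using thi[OF ltN[OF \<open>l \<in> {l..<r}\<close>]] by linarith
    qed
    have m1': "p + q \<ge> 1" using mpos mpq by simp
    have w1: "real (p+q) * dl \<le> qhat / 2" using mN dl(2) mpq by simp
    have w2: "real (p+q) * dl \<le> 1/3" using mN dl(3) mpq by simp
    have Xp: "p > 0 \<Longrightarrow> Fpot c dl (p+q) n - Fpot c dl p n \<le> c * ln (real (p+q) / real p) / ln (1 / (real (p+q) * dl))"
      by (rule Fpot_diff) (use dl(1) c(1) w2 in auto)
    have Xq: "q > 0 \<Longrightarrow> Fpot c dl (p+q) n - Fpot c dl q n \<le> c * ln (real (p+q) / real q) / ln (1 / (real (p+q) * dl))"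
      by (rule Fpot_diff) (use dl(1) c(1) w2 in auto)
    have F1: "q = 0 \<Longrightarrow> Fpot c dl p n = Fpot c dl (p+q) n" by simp
    have F2: "p = 0 \<Longrightarrow> Fpot c dl q n = Fpot c dl (p+q) n" by simp
    have PWr: "real (p+q) * Fpot c dl (p+q) n + real (p+q) * lam * nu \<le> A + real q * nu + real p * Fpot c dl p n + real q * Fpot c dl q n"
      by (rule PW[OF m1' Ab nu(1) nu(2) nua lam0 lam1 F1 F2 Xp Xq w1 w2 dl(1) c(1) c(2) c(3)])
    show ?thesis using split S1 S2 IT IF PWr mpq by simp
  qed
  have bp: "bayes_plausible mu0 tau" if "tau \<in> set_pmf (Pol [])" for tau
    using V that by (auto simp: valid_policy_def)
  have EbG: "0 \<le> measure_pmf.expectation (bernoulli_pmf nu) (G i tau nu) \<and> measure_pmf.expectation (bernoulli_pmf nu) (G i tau nu) \<le> real n + 1"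
    if "i < Nn" "0 \<le> nu" "nu \<le> 1" for i tau nu
    by (rule E_bnd) (use Gb[OF that] in blast)
  have EtG: "0 \<le> measure_pmf.expectation tau (\<lambda>nu. measure_pmf.expectation (bernoulli_pmf nu) (G i tau nu)) \<and>
      measure_pmf.expectation tau (\<lambda>nu. measure_pmf.expectation (bernoulli_pmf nu) (G i tau nu)) \<le> real n + 1"
    if "i < Nn" "tau \<in> set_pmf (Pol [])" for i tau
    by (rule E_bnd) (use EbG[OF that(1)] bp_supp[OF bp[OF that(2)]] in blast)
  have ltN: "i < Nn" if "i \<in> {l..<r}" for i using that Suc.prems(4) by auto
  have JS: "(\<Sum>i\<in>{l..<r}. JJ mu0 qhat (alg mu0 qhat dl i) Pol (thg qhat dl i) (Suc n)) =
      (\<Sum>i\<in>{l..<r}. measure_pmf.expectation (Pol []) (\<lambda>tau. measure_pmf.expectation tau (\<lambda>nu.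
         measure_pmf.expectation (bernoulli_pmf nu) (G i tau nu))))"
  proof (rule sum.cong[OF refl])
    fix i assume "i \<in> {l..<r}"
    then have "0 \<le> th i" "th i \<le> 1" using th0 ltN by auto
    then show "JJ mu0 qhat (alg mu0 qhat dl i) Pol (thg qhat dl i) (Suc n) =
      measure_pmf.expectation (Pol []) (\<lambda>tau. measure_pmf.expectation tau (\<lambda>nu.
         measure_pmf.expectation (bernoulli_pmf nu) (G i tau nu)))"
      unfolding G_def al_def th_def by (rule JJ_Suc[OF V])
  qed
  also have "\<dots> = measure_pmf.expectation (Pol []) (\<lambda>tau. \<Sum>i\<in>{l..<r}. measure_pmf.expectation tau (\<lambda>nu.
         measure_pmf.expectation (bernoulli_pmf nu) (G i tau nu)))"
  proof (rule E_sum[where B="real n + 1", symmetric])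
    fix i tau assume "i \<in> {l..<r}" "tau \<in> set_pmf (Pol [])"
    then show "\<bar>measure_pmf.expectation tau (\<lambda>nu. measure_pmf.expectation (bernoulli_pmf nu) (G i tau nu))\<bar> \<le> real n + 1"
      using EtG[OF ltN] by fastforce
  qed
  finally have JS2: "(\<Sum>i\<in>{l..<r}. JJ mu0 qhat (alg mu0 qhat dl i) Pol (thg qhat dl i) (Suc n)) =
      measure_pmf.expectation (Pol []) (\<lambda>tau. \<Sum>i\<in>{l..<r}. measure_pmf.expectation tau (\<lambda>nu.
         measure_pmf.expectation (bernoulli_pmf nu) (G i tau nu)))" .
  have inner: "real m * Fpot c dl m (Suc n) \<le> (\<Sum>i\<in>{l..<r}. measure_pmf.expectation tau (\<lambda>nu.
         measure_pmf.expectation (bernoulli_pmf nu) (G i tau nu)))"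
    if tau: "tau \<in> set_pmf (Pol [])" for tau
  proof -
    have B1: "(\<Sum>i\<in>{l..<r}. measure_pmf.expectation tau (\<lambda>nu. measure_pmf.expectation (bernoulli_pmf nu) (G i tau nu)))
        = measure_pmf.expectation tau (\<lambda>nu. \<Sum>i\<in>{l..<r}. measure_pmf.expectation (bernoulli_pmf nu) (G i tau nu))"
    proof (rule E_sum[where B="real n + 1", symmetric])
      fix i nu assume "i \<in> {l..<r}" "nu \<in> set_pmf tau"
      then show "\<bar>measure_pmf.expectation (bernoulli_pmf nu) (G i tau nu)\<bar> \<le> real n + 1"
        using EbG[OF ltN] bp_supp[OF bp[OF tau]] by fastforce
    qed
    have B2: "(\<Sum>i\<in>{l..<r}. measure_pmf.expectation (bernoulli_pmf nu) (G i tau nu))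
        = measure_pmf.expectation (bernoulli_pmf nu) (\<lambda>omega. \<Sum>i\<in>{l..<r}. G i tau nu omega)"
      if "0 \<le> nu" "nu \<le> 1" for nu
    proof (rule E_sum[where B="real n + 1", symmetric])
      fix i omega assume "i \<in> {l..<r}"
      then show "\<bar>G i tau nu omega\<bar> \<le> real n + 1" using Gb[OF ltN that] by fastforce
    qed
    have sumG: "0 \<le> (\<Sum>i\<in>{l..<r}. G i tau nu omega) \<and> (\<Sum>i\<in>{l..<r}. G i tau nu omega) \<le> real m * (real n + 1)"
      if "0 \<le> nu" "nu \<le> 1" for nu omega
    proof -
      have "(\<Sum>i\<in>{l..<r}. G i tau nu omega) \<le> (\<Sum>i\<in>{l..<r}. real n + 1)"
        by (rule sum_mono) (use Gb[OF ltN that] in blast)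
      moreover have "0 \<le> (\<Sum>i\<in>{l..<r}. G i tau nu omega)"
        by (rule sum_nonneg) (use Gb[OF ltN that] in blast)
      ultimately show ?thesis using m_def by simp
    qed
    have B3: "real m * Fpot c dl m n + real m * lam * nu \<le> measure_pmf.expectation (bernoulli_pmf nu) (\<lambda>omega. \<Sum>i\<in>{l..<r}. G i tau nu omega)
        \<and> \<bar>measure_pmf.expectation (bernoulli_pmf nu) (\<lambda>omega. \<Sum>i\<in>{l..<r}. G i tau nu omega)\<bar> \<le> real m * (real n + 1)"
      if "0 \<le> nu" "nu \<le> 1" for nu
    proof -
      have "real m * Fpot c dl m n + real m * lam * nu \<le> measure_pmf.expectation (bernoulli_pmf nu) (\<lambda>omega. \<Sum>i\<in>{l..<r}. G i tau nu omega)"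
        by (rule E_ge[where B="real m * (real n + 1)"]) (use PWb[OF that] sumG[OF that] in auto)
      moreover have "0 \<le> measure_pmf.expectation (bernoulli_pmf nu) (\<lambda>omega. \<Sum>i\<in>{l..<r}. G i tau nu omega) \<and>
          measure_pmf.expectation (bernoulli_pmf nu) (\<lambda>omega. \<Sum>i\<in>{l..<r}. G i tau nu omega) \<le> real m * (real n + 1)"
        by (rule E_bnd) (use sumG[OF that] in blast)
      ultimately show ?thesis by auto
    qed
    have "real m * Fpot c dl m (Suc n) = real m * Fpot c dl m n + real m * lam * mu0"
      unfolding lam_def using mu(1) by (simp add: field_simps)
    also have "\<dots> = measure_pmf.expectation tau (\<lambda>nu. real m * Fpot c dl m n + (real m * lam) * nu)"
      by (simp only: E_lin[OF bp[OF tau]])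
    also have "\<dots> \<le> measure_pmf.expectation tau (\<lambda>nu. \<Sum>i\<in>{l..<r}. measure_pmf.expectation (bernoulli_pmf nu) (G i tau nu))"
    proof (rule E_mono[where B="\<bar>real m * Fpot c dl m n\<bar> + \<bar>real m * lam\<bar> + real m * (real n + 1)"])
      fix nu assume nu: "nu \<in> set_pmf tau"
      have nu01: "0 \<le> nu" "nu \<le> 1" using bp_supp[OF bp[OF tau] nu] by auto
      show "real m * Fpot c dl m n + real m * lam * nu \<le> (\<Sum>i\<in>{l..<r}. measure_pmf.expectation (bernoulli_pmf nu) (G i tau nu))"
        using B3[OF nu01] B2[OF nu01] by simp
      show "\<bar>(\<Sum>i\<in>{l..<r}. measure_pmf.expectation (bernoulli_pmf nu) (G i tau nu))\<bar> \<le> \<bar>real m * Fpot c dl m n\<bar> + \<bar>real m * lam\<bar> + real m * (real n + 1)"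
        using B3[OF nu01] B2[OF nu01] by (smt (verit) abs_ge_zero)
      have "\<bar>real m * lam * nu\<bar> \<le> \<bar>real m * lam\<bar>" using nu01 by (simp add: abs_mult mult_left_le)
      then show "\<bar>real m * Fpot c dl m n + real m * lam * nu\<bar> \<le> \<bar>real m * Fpot c dl m n\<bar> + \<bar>real m * lam\<bar> + real m * (real n + 1)"
        using abs_triangle_ineq[of "real m * Fpot c dl m n" "real m * lam * nu"] mult_nonneg_nonneg[of "real m" "real n + 1"] by linarith
    qed
    also have "\<dots> = (\<Sum>i\<in>{l..<r}. measure_pmf.expectation tau (\<lambda>nu. measure_pmf.expectation (bernoulli_pmf nu) (G i tau nu)))"
      using B1 by simp
    finally show ?thesis .
  qed
  have "real m * Fpot c dl m (Suc n) \<le> measure_pmf.expectation (Pol []) (\<lambda>tau. \<Sum>i\<in>{l..<r}. measure_pmf.expectation tau (\<lambda>nu.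
         measure_pmf.expectation (bernoulli_pmf nu) (G i tau nu)))"
  proof (rule E_ge[where B="real m * (real n + 1)"])
    fix tau assume tau: "tau \<in> set_pmf (Pol [])"
    show "real m * Fpot c dl m (Suc n) \<le> (\<Sum>i\<in>{l..<r}. measure_pmf.expectation tau (\<lambda>nu. measure_pmf.expectation (bernoulli_pmf nu) (G i tau nu)))"
      by (rule inner[OF tau])
    have "(\<Sum>i\<in>{l..<r}. measure_pmf.expectation tau (\<lambda>nu. measure_pmf.expectation (bernoulli_pmf nu) (G i tau nu))) \<le> (\<Sum>i\<in>{l..<r}. real n + 1)"
      by (rule sum_mono) (use EtG[OF ltN tau] in blast)
    moreover have "0 \<le> (\<Sum>i\<in>{l..<r}. measure_pmf.expectation tau (\<lambda>nu. measure_pmf.expectation (bernoulli_pmf nu) (G i tau nu)))"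
      by (rule sum_nonneg) (use EtG[OF ltN tau] in blast)
    ultimately show "\<bar>\<Sum>i\<in>{l..<r}. measure_pmf.expectation tau (\<lambda>nu. measure_pmf.expectation (bernoulli_pmf nu) (G i tau nu))\<bar> \<le> real m * (real n + 1)"
      using m_def by simp
  qed
  then show ?case using JS2 m_def by simp
qed

lemma prob_bnd: "0 \<le> measure_pmf.prob tau A \<and> measure_pmf.prob tau A \<le> 1"
  by (simp add: measure_pmf.prob_le_1)

lemma OPT_set_bdd: "bdd_above ((\<lambda>tau. measure_pmf.prob tau {nu. acts1 mu0 qhat alpha nu}) ` {tau. bayes_plausible mu0 tau})"
  by (rule bdd_aboveI[where M=1]) (auto simp: measure_pmf.prob_le_1)

lemma bp_return: "0 \<le> mu0 \<Longrightarrow> mu0 \<le> 1 \<Longrightarrow> bayes_plausible mu0 (return_pmf mu0)"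
  by (simp add: bayes_plausible_def)

lemma OPT_le1: assumes "0 \<le> mu0" "mu0 \<le> 1" shows "OPT mu0 qhat alpha \<le> 1"
  unfolding OPT_def
  by (rule cSup_least) (use bp_return[OF assms] in \<open>auto simp: measure_pmf.prob_le_1\<close>)

lemma OPT_ge:
  assumes mu: "0 < mu0" "mu0 < qhat" and th: "qhat \<le> th" "th \<le> 1"
  shows "mu0 / th \<le> OPT mu0 qhat ((qhat - mu0) / (th - mu0))"
proof -
  define al where "al = (qhat - mu0) / (th - mu0)"
  define tau where "tau = map_pmf (\<lambda>b. if b then th else 0) (bernoulli_pmf (mu0 / th))"
  have thpos: "0 < th" using mu th by simp
  have p01: "0 \<le> mu0 / th" "mu0 / th \<le> 1" using mu th thpos by (auto simp: divide_le_eq)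
  have bp: "bayes_plausible mu0 tau"
    unfolding bayes_plausible_def tau_def
  proof (intro conjI)
    show "finite (set_pmf (map_pmf (\<lambda>b. if b then th else 0) (bernoulli_pmf (mu0 / th))))" by simp
    show "set_pmf (map_pmf (\<lambda>b. if b then th else 0) (bernoulli_pmf (mu0 / th))) \<subseteq> {0..1}"
      using th thpos by auto
    show "measure_pmf.expectation (map_pmf (\<lambda>b. if b then th else 0) (bernoulli_pmf (mu0 / th))) (\<lambda>nu. nu) = mu0"
      using p01 thpos by simp
  qed
  have "{nu. acts1 mu0 qhat al nu} = {nu. th \<le> nu}" unfolding al_def using acts_iff[OF mu(2) th(1)] by auto
  then have "measure_pmf.prob tau {nu. acts1 mu0 qhat al nu} = measure_pmf.prob (bernoulli_pmf (mu0 / th)) {True}"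
  proof -
    assume e: "{nu. acts1 mu0 qhat al nu} = {nu. th \<le> nu}"
    have "(\<lambda>b. if b then th else 0) -` {nu. th \<le> nu} = {True}" using thpos by auto
    then show ?thesis unfolding tau_def e by simp
  qed
  also have "\<dots> = mu0 / th" using p01 by (simp add: measure_pmf_single)
  finally have "mu0 / th = measure_pmf.prob tau {nu. acts1 mu0 qhat al nu}" by simp
  also have "\<dots> \<le> OPT mu0 qhat al"
    unfolding OPT_def by (rule cSup_upper) (use bp OPT_set_bdd in auto)
  finally show ?thesis unfolding al_def .
qed

lemma Ecst_eq:
  assumes "bayes_plausible mu0 tau"
  shows "measure_pmf.expectation tau (cst th) = mu0 - th * measure_pmf.prob tau {nu. th \<le> nu}"
proof -
  have b: "\<And>nu. nu \<in> set_pmf tau \<Longrightarrow> \<bar>nu\<bar> \<le> 1" using bp_supp[OF assms] by fastforce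
  have i1: "integrable (measure_pmf tau) (\<lambda>nu. nu)" by (rule int_bnd[OF b])
  have i2: "integrable (measure_pmf tau) (\<lambda>nu. th * indicator {nu. th \<le> nu} nu)"
    by (rule int_bnd[where B="\<bar>th\<bar>"]) (auto simp: indicator_def)
  have "measure_pmf.expectation tau (cst th) = measure_pmf.expectation tau (\<lambda>nu. nu - th * indicator {nu. th \<le> nu} nu)"
    by (rule E_cong) (auto simp: cst_def indicator_def)
  also have "\<dots> = measure_pmf.expectation tau (\<lambda>nu. nu) - measure_pmf.expectation tau (\<lambda>nu. th * indicator {nu. th \<le> nu} nu)"
    using i1 i2 by (rule Bochner_Integration.integral_diff)
  also have "\<dots> = mu0 - th * measure_pmf.prob tau {nu. th \<le> nu}"
    using assms by (simp add: bayes_plausible_def)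
  finally show ?thesis .
qed

lemma cst_le_loss:
  assumes mu: "0 < mu0" "mu0 < qhat" and th: "qhat \<le> th" "th \<le> 1" and bp: "bayes_plausible mu0 tau"
  shows "measure_pmf.expectation tau (cst th) \<le>
     OPT mu0 qhat ((qhat - mu0) / (th - mu0)) - measure_pmf.prob tau {nu. acts1 mu0 qhat ((qhat - mu0) / (th - mu0)) nu}"
proof -
  have thpos: "0 < th" using mu th by simp
  define P where "P = measure_pmf.prob tau {nu. th \<le> nu}"
  have e: "{nu. acts1 mu0 qhat ((qhat - mu0) / (th - mu0)) nu} = {nu. th \<le> nu}" using acts_iff[OF mu(2) th(1)] by auto
  have E: "measure_pmf.expectation tau (cst th) = mu0 - th * P" using Ecst_eq[OF bp] P_def by simp
  have E0: "0 \<le> mu0 - th * P" using Ecst_bnd[OF bp, of th] thpos th E by auto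
  have "mu0 - th * P \<le> (mu0 - th * P) / th" using E0 thpos th(2) by (simp add: le_divide_eq mult_left_le)
  also have "\<dots> = mu0 / th - P" using thpos by (simp add: field_simps)
  also have "\<dots> \<le> OPT mu0 qhat ((qhat - mu0) / (th - mu0)) - P" using OPT_ge[OF mu th] by simp
  finally show ?thesis using E e P_def by simp
qed

lemma regret_ge_JJ:
  assumes mu: "0 < mu0" "mu0 < qhat" and th: "qhat \<le> th" "th \<le> 1" and V: "valid_policy mu0 Pol"
  shows "JJ mu0 qhat ((qhat - mu0) / (th - mu0)) Pol th T \<le> regret mu0 qhat T Pol ((qhat - mu0) / (th - mu0))"
proof -
  define al where "al = (qhat - mu0) / (th - mu0)"
  define Opt where "Opt = OPT mu0 qhat al"
  have th01: "0 \<le> th" "th \<le> 1" using mu th by auto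
  have O01: "0 \<le> Opt \<and> Opt \<le> 1"
  proof -
    have "mu0 / th \<le> Opt" using OPT_ge[OF mu th] Opt_def al_def by simp
    moreover have "0 \<le> mu0 / th" using mu th by simp
    moreover have "Opt \<le> 1" using OPT_le1[of mu0] mu th Opt_def by simp
    ultimately show ?thesis by linarith
  qed
  define R where "R = (\<lambda>h. measure_pmf.expectation (Pol h) (\<lambda>tau. measure_pmf.prob tau {nu. acts1 mu0 qhat al nu}))"
  have R01: "0 \<le> R h \<and> R h \<le> 1" for h unfolding R_def by (rule E_bnd) (use prob_bnd in blast)
  have step1: "gP Pol th h \<le> Opt - R h" for h
  proof -
    have "gP Pol th h \<le> measure_pmf.expectation (Pol h) (\<lambda>tau. Opt - measure_pmf.prob tau {nu. acts1 mu0 qhat al nu})"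
      unfolding gP_def
    proof (rule E_mono[where B=2])
      fix tau assume tau: "tau \<in> set_pmf (Pol h)"
      then have bp: "bayes_plausible mu0 tau" using V by (auto simp: valid_policy_def)
      show "measure_pmf.expectation tau (cst th) \<le> Opt - measure_pmf.prob tau {nu. acts1 mu0 qhat al nu}"
        using cst_le_loss[OF mu th bp] Opt_def al_def by simp
      show "\<bar>measure_pmf.expectation tau (cst th)\<bar> \<le> 2" using Ecst_bnd[OF bp th01] by auto
      show "\<bar>Opt - measure_pmf.prob tau {nu. acts1 mu0 qhat al nu}\<bar> \<le> 2" using O01 prob_bnd[of tau "{nu. acts1 mu0 qhat al nu}"] unfolding abs_le_iff by linarith
    qed
    also have "\<dots> = Opt - R h"
    proof -
      have "integrable (measure_pmf (Pol h)) (\<lambda>tau. measure_pmf.prob tau {nu. acts1 mu0 qhat al nu})"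
        by (rule int_bnd[where B=1]) (use prob_bnd in auto)
      then show ?thesis unfolding R_def by simp
    qed
    finally show ?thesis .
  qed
  have step2: "measure_pmf.expectation (hist_dist mu0 qhat al Pol t) (gP Pol th) \<le> Opt - round_success mu0 qhat al Pol t" for t
  proof -
    have "measure_pmf.expectation (hist_dist mu0 qhat al Pol t) (gP Pol th) \<le> measure_pmf.expectation (hist_dist mu0 qhat al Pol t) (\<lambda>h. Opt - R h)"
    proof (rule E_mono[where B=2])
      fix h
      show "gP Pol th h \<le> Opt - R h" by (rule step1)
      show "\<bar>gP Pol th h\<bar> \<le> 2" using gP_bnd[OF V th01, of h] by auto
      show "\<bar>Opt - R h\<bar> \<le> 2" using O01 R01[of h] by auto
    qed
    also have "\<dots> = Opt - round_success mu0 qhat al Pol t"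
    proof -
      have "integrable (measure_pmf (hist_dist mu0 qhat al Pol t)) R"
        by (rule int_bnd[where B=1]) (use R01 in auto)
      then show ?thesis unfolding round_success_def R_def by simp
    qed
    finally show ?thesis .
  qed
  have "JJ mu0 qhat al Pol th T \<le> (\<Sum>t<T. Opt - round_success mu0 qhat al Pol t)"
    unfolding JJ_def by (rule sum_mono) (rule step2)
  also have "\<dots> = regret mu0 qhat T Pol al" unfolding regret_def Opt_def by (simp add: sum_subtractf)
  finally show ?thesis unfolding al_def .
qed

lemma exists_big:
  fixes f :: "nat \<Rightarrow> real"
  assumes "N > 0" "real N * x \<le> (\<Sum>i\<in>{0..<N}. f i)"
  shows "\<exists>i<N. x \<le> f i"
proof (rule ccontr)
  assume "\<not> ?thesis"
  then have "\<And>i. i \<in> {0..<N} \<Longrightarrow> f i < x" by auto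
  then have "(\<Sum>i\<in>{0..<N}. f i) < (\<Sum>i\<in>{0..<N}. x)" using assms(1) by (intro sum_strict_mono) auto
  then show False using assms(2) by simp
qed

lemma regret_bdd:
  assumes "0 \<le> mu0" "mu0 \<le> 1"
  shows "regret mu0 qhat T Pol alpha \<le> real T"
proof -
  have "0 \<le> round_success mu0 qhat alpha Pol t" for t
    unfolding round_success_def
    by (rule E_bnd[where lo=0 and hi=1, THEN conjunct1]) (rule E_bnd, use prob_bnd in blast)
  then have "0 \<le> (\<Sum>t<T. round_success mu0 qhat alpha Pol t)" by (intro sum_nonneg) auto
  moreover have "real T * OPT mu0 qhat alpha \<le> real T" using OPT_le1[OF assms] by (simp add: mult_left_le)
  ultimately show ?thesis unfolding regret_def by linarith
qed

theorem theorem3p3: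
  fixes mu0 qhat :: real
  assumes "0 < mu0" and "mu0 < 1" and "mu0 < qhat" and "qhat < 1"
  shows "\<exists>c > 0. \<exists>T0 :: nat. \<forall>T \<ge> T0. \<forall>Pol :: policy. valid_policy mu0 Pol \<longrightarrow>
           (SUP alpha \<in> {0..1}. regret mu0 qhat T Pol alpha) \<ge> c * ln (ln (real T))"
proof -
  define w0 where "w0 = min (1 - qhat) (min (qhat/2) (1/3))"
  define c where "c = min (min (qhat/6) (1/8)) (mu0/16)"
  define L0 where "L0 = ln (1 / w0)"
  define T0 where "T0 = nat \<lceil>exp (L0^2)\<rceil> + 3"
  have w0a: "w0 \<le> min (qhat/2) (1/3)" "w0 \<le> 1 - qhat" unfolding w0_def by (rule min.cobounded2, rule min.cobounded1)
  have w0b: "min (qhat/2) (1/3) \<le> qhat/2" "min (qhat/2) (1/3) \<le> (1/3::real)" by (rule min.cobounded1, rule min.cobounded2)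
  have w0: "0 < w0" "w0 \<le> 1 - qhat" "w0 \<le> qhat / 2" "w0 \<le> 1/3"
    using assms unfolding w0_def apply (simp add: min_def)
    apply (rule w0a(2)[unfolded w0_def])
    apply (rule order_trans[OF w0a(1)[unfolded w0_def] w0b(1)])
    apply (rule order_trans[OF w0a(1)[unfolded w0_def] w0b(2)])
    done
  have c: "0 < c" "c \<le> qhat / 6" "c \<le> 1/8" "c \<le> mu0 / 16" using assms unfolding c_def
    by (auto simp: min_le_iff_disj)
  have L0: "1 \<le> L0" unfolding L0_def by (rule Lam_ge1[OF w0(1) w0(4)])
  have main: "c / 2 * ln (ln (real T)) \<le> (SUP alpha \<in> {0..1}. regret mu0 qhat T Pol alpha)"
    if T: "T0 \<le> T" and V: "valid_policy mu0 Pol" for T Pol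
  proof -
    define Nn where "Nn = T + 3"
    define dl where "dl = w0 / real Nn"
    have Nnpos: "real Nn > 0" using Nn_def by simp
    have dlpos: "dl > 0" using w0 Nnpos dl_def by simp
    have Ndl: "real Nn * dl = w0" using Nnpos dl_def by simp
    have dlT: "dl \<le> 1 / (real T + 3)"
    proof -
      have "w0 \<le> 1" using w0 by simp
      then have "w0 / real Nn \<le> 1 / real Nn" using Nnpos by (intro divide_right_mono) auto
      then show ?thesis using dl_def Nn_def by simp
    qed
    have MI: "real (Nn - 0) * Fpot c dl (Nn - 0) T \<le> (\<Sum>i\<in>{0..<Nn}. JJ mu0 qhat (alg mu0 qhat dl i) Pol (thg qhat dl i) T)"
    proof (rule main_ind[where Nn=Nn and T=T])
      show "0 < mu0" "mu0 < qhat" using assms by auto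
      show "dl > 0" by (rule dlpos)
      show "real Nn * dl \<le> qhat / 2" "real Nn * dl \<le> 1/3" "qhat + real Nn * dl \<le> 1" using Ndl w0 by auto
      show "dl \<le> 1 / (real T + 3)" by (rule dlT)
      show "0 < c" "c \<le> qhat / 6" "c \<le> 1/8" "c \<le> mu0 / 16" using c by auto
      show "T \<le> T" "valid_policy mu0 Pol" "0 < Nn" "Nn \<le> Nn" using V Nn_def by auto
    qed
    then obtain i where i: "i < Nn" "Fpot c dl Nn T \<le> JJ mu0 qhat (alg mu0 qhat dl i) Pol (thg qhat dl i) T"
      using exists_big[of Nn "Fpot c dl Nn T"] Nn_def by auto
    define th where "th = thg qhat dl i"
    have th: "qhat \<le> th" "th \<le> 1"
    proof -
      have "real i * dl \<le> real Nn * dl" using i(1) dlpos by (intro mult_right_mono) auto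
      moreover have "0 \<le> real i * dl" using dlpos by simp
      ultimately show "qhat \<le> th" "th \<le> 1" unfolding th_def thg_def using Ndl w0 by auto
    qed
    define al where "al = (qhat - mu0) / (th - mu0)"
    have al: "al \<in> {0..1}" using th assms unfolding al_def by (auto simp: divide_le_eq)
    have R: "JJ mu0 qhat al Pol th T \<le> regret mu0 qhat T Pol al"
      unfolding al_def by (rule regret_ge_JJ[OF assms(1,3) th V])
    have JJi: "JJ mu0 qhat (alg mu0 qhat dl i) Pol (thg qhat dl i) T = JJ mu0 qhat al Pol th T"
      unfolding al_def th_def alg_def by simp
    have sup: "regret mu0 qhat T Pol al \<le> (SUP alpha \<in> {0..1}. regret mu0 qhat T Pol alpha)"
    proof (rule cSUP_upper[OF al])
      show "bdd_above ((regret mu0 qhat T Pol) ` {0..1})"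
        by (rule bdd_aboveI[where M="real T"]) (use regret_bdd assms in auto)
    qed
    have T3: "3 \<le> real T" using T T0_def by simp
    have Tbig: "exp (L0^2) \<le> real T"
    proof -
      have "exp (L0^2) \<le> real (nat \<lceil>exp (L0^2)\<rceil>)" by (simp add: real_nat_ceiling_ge)
      also have "\<dots> \<le> real T" using T T0_def by simp
      finally show ?thesis .
    qed
    have "ln (exp (L0^2)) \<le> ln (real T)" using Tbig T3 by (subst ln_le_cancel_iff) auto
    then have lnT: "L0^2 \<le> ln (real T)" by simp
    have L0pos: "0 < L0" using L0 by simp
    have L2: "0 < L0^2" using L0pos by simp
    have "ln (L0^2) \<le> ln (ln (real T))" using lnT L2 by (subst ln_le_cancel_iff) linarith+
    then have lnlnT: "2 * ln L0 \<le> ln (ln (real T))" using L0pos by (simp add: ln_realpow)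
    have mono3: "ln (ln (real T)) \<le> ln (ln (real T + 3))" using T3 by (intro lnln_mono) auto
    have "c / 2 * ln (ln (real T)) \<le> c * (ln (ln (real T + 3)) - ln L0)"
    proof -
      have "ln (ln (real T)) / 2 \<le> ln (ln (real T + 3)) - ln L0" using lnlnT mono3 by linarith
      then have "c * (ln (ln (real T)) / 2) \<le> c * (ln (ln (real T + 3)) - ln L0)" using c by (intro mult_left_mono) auto
      then show ?thesis by simp
    qed
    also have "\<dots> \<le> Fpot c dl Nn T"
    proof -
      have "ln (ln (1 / (real Nn * dl))) = ln L0" using Ndl L0_def by simp
      then have "Fpot c dl Nn T = c * max 0 (ln (ln (real T + 3)) - ln L0)" unfolding Fpot_def by simp
      moreover have "c * (ln (ln (real T + 3)) - ln L0) \<le> c * max 0 (ln (ln (real T + 3)) - ln L0)"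
        using c by (intro mult_left_mono) auto
      ultimately show ?thesis by simp
    qed
    finally show ?thesis using i(2) JJi R sup by linarith
  qed
  show ?thesis
  proof (intro exI[of _ "c/2"] conjI exI[of _ T0] allI impI)
    show "c / 2 > 0" using c by simp
  next
    fix T Pol assume "T0 \<le> T" "valid_policy mu0 Pol"
    then show "c / 2 * ln (ln (real T)) \<le> (SUP alpha \<in> {0..1}. regret mu0 qhat T Pol alpha)" by (rule main)
  qed
qed

end
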